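(* Let $(S,\alpha)$ be a twisted K3 surface, $d=\mathrm{ord}(\alpha)$, $B$ a B-field lift of $\alpha$, and $\lambda:(D_{\widetilde{NS}(S,B)},q)\cong(D_{T(S,B)},-q)$ the natural isometry. Then $(0,0,-\tfrac1d)\in\widetilde{NS}(S,B)^\vee$, and if $y\in T(S,B)^\vee$ represents $\lambda([(0,0,-\tfrac1d)])$, the map $e^B$ restricts to a Hodge isometry $$e^B:T(S)\xrightarrow{\ \sim\ }\langle T(S,B),\,y\rangle\subset T(S,B)^\vee .$$ Moreover, the surjection $\alpha:T(S)\to\mathbb Z/d\mathbb Z$ coincides with the composite $T(S)\xrightarrow{e^B}\langle T(S,B),y\rangle/T(S,B)=\langle [y]\rangle\cong\mathbb Z/d\mathbb Z$, where $[y]\mapsto \bar 1$.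
   Context: $S$ is a complex projective K3 surface with $NS(S)$, $T(S)=NS(S)^\perp\subset H^2(S,\mathbb Z)$ and holomorphic 2-form class $\omega_S$. Mukai lattice $\widetilde H(S,\mathbb Z)=H^0\oplus H^2\oplus H^4$, elements $(a,l,b)$, pairing $((a,l,b),(a',l',b'))=(l,l')-ab'-a'b$. For $B\in H^2(S,\mathbb Q)$, $e^B(a,l,b)=(a,l+aB,b+(B,l)+\frac a2(B,B))$. $\mathrm{Br}(S)\cong H^2(S,\mathbb Q)/(NS(S)_{\mathbb Q}+H^2(S,\mathbb Z))\cong \mathrm{Hom}(T(S),\mathbb Q/\mathbb Z)$, the second isomorphism sending the class of $B$ to $t\mapsto (B,t)\bmod\mathbb Z$; thus $\alpha$ of order $d$ is identified with a surjection $T(S)\to \frac1d\mathbb Z/\mathbb Z\cong\mathbb Z/d\mathbb Z$. A B-field lift of $\alpha$ is a preimage $B\in H^2(S,\mathbb Q)$. The twisted Mukai lattice $\widetilde H(S,B,\mathbb Z)$ is $\widetilde H(S,\mathbb Z)$ with Hodge structure of weight two with $(2,0)$-part $\mathbb C e^B(\omega_S)$; $\widetilde{NS}(S,B)=e^B(\omega_S)^\perp\cap\widetilde H(S,\mathbb Z)$ and $T(S,B)$ is its orthogonal complement in $\widetilde H(S,\mathbb Z)$, with induced Hodge structure; $T(S)$ has its Hodge structure from $H^2(S)$. For an even lattice $L$, $D_L=L^\vee/L$ with $q(x)=(x,x)\bmod 2\mathbb Z$. The natural isometry $\lambda$ sends $[x]$, $x\in\widetilde{NS}(S,B)^\vee$,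 to $[y]$ where $y\in T(S,B)^\vee$ satisfies $x+y\in\widetilde H(S,\mathbb Z)$. *)

theory Defs
  imports Complex_Main
begin

section \<open>The K3 lattice  U^3 + E8(-1)^2  on coordinates 0..21\<close>

definition E8_edge :: "nat \<Rightarrow> nat \<Rightarrow> bool" where
  "E8_edge i j \<longleftrightarrow> (i < 6 \<and> j = i + 1) \<or> (j < 6 \<and> i = j + 1)
     \<or> (i = 4 \<and> j = 7) \<or> (i = 7 \<and> j = 4)"

definition E8neg :: "nat \<Rightarrow> nat \<Rightarrow> int" where
  "E8neg i j = (if i = j then -2 else if E8_edge i j then 1 else 0)"

definition K3_gram :: "nat \<Rightarrow> nat \<Rightarrow> int" where
  "K3_gram i j =
     (if i < 6 \<and> j < 6 then (if i div 2 = j div 2 \<and> i \<noteq> j then 1 else 0)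
      else if 6 \<le> i \<and> i < 14 \<and> 6 \<le> j \<and> j < 14 then E8neg (i - 6) (j - 6)
      else if 14 \<le> i \<and> i < 22 \<and> 14 \<le> j \<and> j < 22 then E8neg (i - 14) (j - 14)
      else 0)"

definition H2 :: "(nat \<Rightarrow> 'a::zero) set" where
  "H2 = {x. \<forall>i\<ge>22. x i = 0}"

text \<open>Bilinear (not hermitian) extension of the intersection form.\<close>
definition h2pair :: "(nat \<Rightarrow> 'a::comm_ring_1) \<Rightarrow> (nat \<Rightarrow> 'a) \<Rightarrow> 'a" where
  "h2pair x y = (\<Sum>i<22. \<Sum>j<22. of_int (K3_gram i j) * x i * y j)"

definition H2Z :: "(nat \<Rightarrow> rat) set" where
  "H2Z = {x \<in> H2. \<forall>i. x i \<in> \<int>}"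

definition cplx :: "(nat \<Rightarrow> rat) \<Rightarrow> (nat \<Rightarrow> complex)" where
  "cplx x = (\<lambda>i. of_rat (x i))"

definition is_period :: "(nat \<Rightarrow> complex) \<Rightarrow> bool" where
  "is_period \<omega> \<longleftrightarrow> \<omega> \<in> H2 \<and> h2pair \<omega> \<omega> = 0
      \<and> Re (h2pair \<omega> (\<lambda>i. cnj (\<omega> i))) > 0"

definition NS :: "(nat \<Rightarrow> complex) \<Rightarrow> (nat \<Rightarrow> rat) set" where
  "NS \<omega> = {l \<in> H2Z. h2pair (cplx l) \<omega> = 0}"

definition TS :: "(nat \<Rightarrow> complex) \<Rightarrow> (nat \<Rightarrow> rat) set" where
  "TS \<omega> = {t \<in> H2Z. \<forall>l \<in> NS \<omega>. h2pair t l = 0}"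

text \<open>Projective K3 surface, described by its period (Torelli + surjectivity of the period map).\<close>
definition projective_K3_period :: "(nat \<Rightarrow> complex) \<Rightarrow> bool" where
  "projective_K3_period \<omega> \<longleftrightarrow> is_period \<omega> \<and> (\<exists>l \<in> NS \<omega>. h2pair l l > 0)"

text \<open>Order of the Brauer class of B, i.e. of the homomorphism t |-> (B,t) mod Z on T(S).\<close>
definition br_order :: "(nat \<Rightarrow> complex) \<Rightarrow> (nat \<Rightarrow> rat) \<Rightarrow> nat" where
  "br_order \<omega> B = (LEAST d::nat. d > 0 \<and> (\<forall>t \<in> TS \<omega>. of_nat d * h2pair B t \<in> \<int>))"

type_synonym 'a mukai = "'a \<times> (nat \<Rightarrow> 'a) \<times> 'a"

definition mpair :: "'a::comm_ring_1 mukai \<Rightarrow> 'a mukai \<Rightarrow> 'a" where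
  "mpair v w = (case v of (a, l, b) \<Rightarrow> case w of (a', l', b') \<Rightarrow>
      h2pair l l' - a * b' - a' * b)"

definition eB :: "(nat \<Rightarrow> 'a::field) \<Rightarrow> 'a mukai \<Rightarrow> 'a mukai" where
  "eB B v = (case v of (a, l, b) \<Rightarrow>
      (a, (\<lambda>i. l i + a * B i), b + h2pair B l + a / 2 * h2pair B B))"

definition madd :: "'a::plus mukai \<Rightarrow> 'a mukai \<Rightarrow> 'a mukai" where
  "madd v w = (case v of (a, l, b) \<Rightarrow> case w of (a', l', b') \<Rightarrow>
      (a + a', (\<lambda>i. l i + l' i), b + b'))"

definition msc :: "'a::times \<Rightarrow> 'a mukai \<Rightarrow> 'a mukai" where
  "msc c v = (case v of (a, l, b) \<Rightarrow> (c * a, (\<lambda>i. c * l i), c * b))"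

definition mcplx :: "rat mukai \<Rightarrow> complex mukai" where
  "mcplx v = (case v of (a, l, b) \<Rightarrow> (of_rat a, cplx l, of_rat b))"

definition MZ :: "rat mukai set" where
  "MZ = {(a, l, b). a \<in> \<int> \<and> l \<in> H2Z \<and> b \<in> \<int>}"

definition qspan :: "rat mukai set \<Rightarrow> rat mukai set" where
  "qspan L = {(\<Sum>v\<in>F. c v * fst v, (\<lambda>i. \<Sum>v\<in>F. c v * fst (snd v) i),
               \<Sum>v\<in>F. c v * snd (snd v)) | F c. finite F \<and> F \<subseteq> L}"

definition mdual :: "rat mukai set \<Rightarrow> rat mukai set" where
  "mdual L = {x \<in> qspan L. \<forall>v \<in> L. mpair x v \<in> \<int>}"

definition NSt :: "(nat \<Rightarrow> complex) \<Rightarrow> (nat \<Rightarrow> rat) \<Rightarrow> rat mukai set" where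
  "NSt \<omega> B = {v \<in> MZ. mpair (mcplx v) (eB (cplx B) (0, \<omega>, 0)) = 0}"

definition TSB :: "(nat \<Rightarrow> complex) \<Rightarrow> (nat \<Rightarrow> rat) \<Rightarrow> rat mukai set" where
  "TSB \<omega> B = {v \<in> MZ. \<forall>w \<in> NSt \<omega> B. mpair v w = 0}"

definition gen_by :: "rat mukai set \<Rightarrow> rat mukai \<Rightarrow> rat mukai set" where
  "gen_by L y = {madd s (msc (of_int k) y) | s k. s \<in> L}"

end

theory Submission imports Defs begin

lemma E8_edge_sym: "E8_edge i j = E8_edge j i"
  unfolding E8_edge_def by blast
lemma E8neg_sym: "E8neg i j = E8neg j i"
  unfolding E8neg_def using E8_edge_sym[of i j] by (simp add: eq_commute[of i j])
lemma c1: "(i div 2 = j div 2 \<and> i \<noteq> j) = (j div 2 = (i::nat) div 2 \<and> j \<noteq> i)" by auto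
lemma K3_gram_sym: "K3_gram i j = K3_gram j i"
  unfolding K3_gram_def 
  apply (subst c1)
  apply (subst E8neg_sym[of "i-6"])
  apply (subst E8neg_sym[of "i-14"])
  apply (simp only: conj_commute conj_left_commute)
  done

lemma h2pair_sym: "h2pair x y = h2pair y x"
  unfolding h2pair_def
  apply (subst sum.swap)
  apply (intro sum.cong refl)
  apply (simp add: K3_gram_sym mult_ac)
  done

lemma h2pair_lin_left:
  "h2pair (\<lambda>i. a * x i + b * y i) z = a * h2pair x z + b * h2pair y z"
  unfolding h2pair_def
  by (simp add: sum_distrib_left sum.distrib algebra_simps)

lemma h2pair_lin_right:
  "h2pair z (\<lambda>i. a * x i + b * y i) = a * h2pair z x + b * h2pair z y"
  using h2pair_lin_left[where a=a and x=x and b=b and y=y and z=z] by (simp add: h2pair_sym)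

lemma h2pair_scale_left: "h2pair (\<lambda>i. a * x i) z = a * h2pair x z"
  using h2pair_lin_left[where a=a and x=x and b=0 and y=x and z=z] by simp

lemma h2pair_scale_right: "h2pair z (\<lambda>i. a * x i) = a * h2pair z x"
  using h2pair_lin_right[where a=a and x=x and b=0 and y=x and z=z] by simp

lemma h2pair_add_left: "h2pair (\<lambda>i. x i + y i) z = h2pair x z + h2pair y z"
  using h2pair_lin_left[where a=1 and x=x and b=1 and y=y and z=z] by simp

lemma h2pair_add_right: "h2pair z (\<lambda>i. x i + y i) = h2pair z x + h2pair z y"
  using h2pair_lin_right[where a=1 and x=x and b=1 and y=y and z=z] by simp

lemma h2pair_diff_left: "h2pair (\<lambda>i. x i - a * y i) z = h2pair x z - a * h2pair y z"
  using h2pair_lin_left[where a=1 and x=x and b="-a" and y=y and z=z] by simp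

lemma h2pair_zero_left: "h2pair (\<lambda>i. 0) z = 0"
  unfolding h2pair_def by simp

lemma h2pair_sum_left:
  "h2pair (\<lambda>i. \<Sum>v\<in>F. g v i) z = (\<Sum>v\<in>F. h2pair (g v) z)"
  unfolding h2pair_def
  by (simp add: sum_distrib_left sum_distrib_right mult_ac sum.swap[of _ F])

lemma h2pair_sum_right:
  "h2pair z (\<lambda>i. \<Sum>v\<in>F. g v i) = (\<Sum>v\<in>F. h2pair z (g v))"
  using h2pair_sum_left[where g=g and F=F and z=z] by (simp add: h2pair_sym)

lemma h2pair_cplx: "h2pair (cplx x) (cplx y) = of_rat (h2pair x y)"
  unfolding h2pair_def cplx_def by (simp add: of_rat_sum of_rat_mult)

lemma rat_den: "\<exists>n::int. n > 0 \<and> of_int n * (q::rat) \<in> \<int>"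
proof -
  obtain a b where q: "quotient_of q = (a, b)" by (cases "quotient_of q")
  have "b > 0" using quotient_of_denom_pos[OF q] .
  moreover have "q = of_int a / of_int b" using quotient_of_div[OF q] .
  ultimately have "of_int b * q = of_int a" by simp
  with \<open>b>0\<close> show ?thesis by (metis Ints_of_int)
qed

lemma common_den_set: "finite I \<Longrightarrow> \<exists>n::int. n > 0 \<and> (\<forall>i\<in>I. of_int n * (x i::rat) \<in> \<int>)"
proof (induction I rule: finite_induct)
  case empty then show ?case by (intro exI[of _ 1]) simp
next
  case (insert j I)
  then obtain n where n: "n > 0" "\<forall>i\<in>I. of_int n * x i \<in> \<int>" by blast
  obtain m where m: "m > 0" "of_int m * x j \<in> \<int>" using rat_den by blast
  have "\<forall>i\<in>insert j I. of_int (n*m) * x i \<in> \<int>"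
  proof
    fix i assume "i \<in> insert j I"
    then show "of_int (n*m) * x i \<in> \<int>"
    proof
      assume "i = j"
      then have "of_int (n*m) * x i = of_int n * (of_int m * x j)" by simp
      then show ?thesis using m by (metis Ints_mult Ints_of_int)
    next
      assume "i \<in> I"
      then have "of_int (n*m) * x i = of_int m * (of_int n * x i)" by simp
      then show ?thesis using n \<open>i\<in>I\<close> by (metis Ints_mult Ints_of_int)
    qed
  qed
  then show ?case using n m by (intro exI[of _ "n*m"]) simp
qed

lemma common_den: "x \<in> H2 \<Longrightarrow> \<exists>n::int. n > 0 \<and> (\<forall>i. of_int n * (x i::rat) \<in> \<int>)"
proof -
  assume x: "x \<in> H2"
  obtain n where n: "n > 0" "\<forall>i\<in>{..<22}. of_int n * x i \<in> \<int>"
    using common_den_set[of "{..<22::nat}" x] by auto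
  have "\<forall>i. of_int n * x i \<in> \<int>"
  proof
    fix i show "of_int n * x i \<in> \<int>"
      using n x by (cases "i < 22") (auto simp: H2_def)
  qed
  with n show ?thesis by blast
qed


lemma h2pair_addscale_right: "h2pair z (\<lambda>i. x i + c * y i) = h2pair z x + c * h2pair z y"
  using h2pair_lin_right[where a=1 and x=x and b=c and y=y and z=z] by simp

lemma h2pair_zero_right: "h2pair z (\<lambda>i. 0) = 0"
  using h2pair_zero_left h2pair_sym by metis

lemma eB_0: "eB B (0, t, 0) = (0, t, h2pair B t)"
  unfolding eB_def by simp

lemma cplx_diff: "cplx (\<lambda>i. l i - a * B i) = (\<lambda>i. cplx l i - of_rat a * cplx B i)"
  unfolding cplx_def by (simp add: of_rat_diff of_rat_mult)

lemma NSt_iff: "(a, l, b) \<in> NSt \<omega> B \<longleftrightarrow> (a, l, b) \<in> MZ \<and> h2pair (cplx (\<lambda>i. l i - a * B i)) \<omega> = 0"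
  unfolding NSt_def mpair_def mcplx_def eB_def cplx_diff h2pair_diff_left
  by (simp add: cplx_def)

lemma H2Z_int: "x \<in> H2Z \<Longrightarrow> y \<in> H2Z \<Longrightarrow> h2pair x y \<in> \<int>"
  unfolding h2pair_def H2Z_def
  by (intro Ints_sum Ints_mult) auto

lemma H2Z_addscale: "x \<in> H2Z \<Longrightarrow> y \<in> H2Z \<Longrightarrow> (\<lambda>i. x i + of_int k * y i) \<in> H2Z"
  unfolding H2Z_def H2_def by (auto intro!: Ints_add Ints_mult)

lemma H2Z_scale: "y \<in> H2Z \<Longrightarrow> (\<lambda>i. of_int k * y i) \<in> H2Z"
  unfolding H2Z_def H2_def by (auto intro!: Ints_mult)

lemma orth_rat:
  assumes r: "r \<in> H2" and h: "h2pair (cplx r) \<omega> = 0" and t: "t \<in> TS \<omega>"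
  shows "h2pair t r = 0"
proof -
  obtain n::int where n: "n > 0" "\<forall>i. of_int n * r i \<in> \<int>" using common_den[OF r] by blast
  define r' where "r' = (\<lambda>i. of_int n * r i)"
  have "r' \<in> H2Z" using n r unfolding r'_def H2Z_def H2_def by auto
  moreover have "cplx r' = (\<lambda>i. of_int n * cplx r i)"
    unfolding r'_def cplx_def by (simp add: of_rat_mult)
  then have "h2pair (cplx r') \<omega> = 0" using h by (simp add: h2pair_scale_left)
  ultimately have "r' \<in> NS \<omega>" unfolding NS_def by auto
  then have "h2pair t r' = 0" using t unfolding TS_def by auto
  then have "of_int n * h2pair t r = 0" unfolding r'_def by (simp add: h2pair_scale_right)
  then show ?thesis using n by simp
qed

lemma h2pair_addscale_left: "h2pair (\<lambda>i. x i + c * y i) z = h2pair x z + c * h2pair y z"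
  using h2pair_lin_left[where a=1 and x=x and b=c and y=y and z=z] by simp

lemma TS_addscale: "t \<in> TS \<omega> \<Longrightarrow> u \<in> TS \<omega> \<Longrightarrow> (\<lambda>i. t i + of_int k * u i) \<in> TS \<omega>"
  unfolding TS_def by (auto intro!: H2Z_addscale simp: h2pair_addscale_left)

lemma TS_scale: "u \<in> TS \<omega> \<Longrightarrow> (\<lambda>i. of_int k * u i) \<in> TS \<omega>"
  unfolding TS_def by (auto intro!: H2Z_scale simp: h2pair_scale_left)

lemma br_exists:
  assumes B: "B \<in> H2"
  shows "\<exists>d::nat. d > 0 \<and> (\<forall>t \<in> TS \<omega>. of_nat d * h2pair B t \<in> \<int>)"
proof -
  obtain n::int where n: "n > 0" "\<forall>i. of_int n * B i \<in> \<int>" using common_den[OF B] by blast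
  have nB: "(\<lambda>i. of_int n * B i) \<in> H2Z" using n B unfolding H2Z_def H2_def by auto
  have "\<forall>t \<in> TS \<omega>. of_nat (nat n) * h2pair B t \<in> \<int>"
  proof
    fix t assume "t \<in> TS \<omega>"
    then have "t \<in> H2Z" unfolding TS_def by auto
    then have "h2pair (\<lambda>i. of_int n * B i) t \<in> \<int>" using nB H2Z_int by blast
    then show "of_nat (nat n) * h2pair B t \<in> \<int>" using n by (simp add: h2pair_scale_left)
  qed
  moreover have "nat n > 0" using n by simp
  ultimately show ?thesis by blast
qed

lemma br_props:
  assumes B: "B \<in> H2"
  shows "br_order \<omega> B > 0" "\<forall>t \<in> TS \<omega>. of_nat (br_order \<omega> B) * h2pair B t \<in> \<int>"
  using LeastI_ex[OF br_exists[OF B, of \<omega>]] unfolding br_order_def by auto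

lemma br_dvd:
  assumes B: "B \<in> H2" and a: "\<forall>t \<in> TS \<omega>. of_int a * h2pair B t \<in> \<int>"
  shows "int (br_order \<omega> B) dvd a"
proof -
  define d where "d = br_order \<omega> B"
  have dp: "d > 0" and dI: "\<forall>t \<in> TS \<omega>. of_nat d * h2pair B t \<in> \<int>"
    using br_props[OF B] unfolding d_def by auto
  define r where "r = a mod int d"
  have r0: "0 \<le> r" "r < int d" unfolding r_def using dp by auto
  have rI: "\<forall>t \<in> TS \<omega>. of_nat (nat r) * h2pair B t \<in> \<int>"
  proof
    fix t assume t: "t \<in> TS \<omega>"
    have "r = a - (a div int d) * int d" unfolding r_def by (simp add: minus_div_mult_eq_mod)
    then have e: "(of_int r :: rat) = of_int a - of_int (a div int d) * of_nat d" by simp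
    have "of_int r * h2pair B t = of_int a * h2pair B t - of_int (a div int d) * (of_nat d * h2pair B t)"
      unfolding e by (simp add: algebra_simps)
    also have "\<dots> \<in> \<int>" using a dI t by (metis Ints_diff Ints_mult Ints_of_int)
    finally show "of_nat (nat r) * h2pair B t \<in> \<int>" using r0 by simp
  qed
  have "r = 0"
  proof (rule ccontr)
    assume "r \<noteq> 0"
    then have "nat r > 0" using r0 by auto
    then have "d \<le> nat r" unfolding d_def br_order_def using rI by (intro Least_le) auto
    then show False using r0 by auto
  qed
  then show ?thesis unfolding r_def d_def by auto
qed


lemma TSB_iff:
  assumes B: "B \<in> H2"
  shows "v \<in> TSB \<omega> B \<longleftrightarrow> (\<exists>l. v = (0, l, h2pair B l) \<and> l \<in> TS \<omega> \<and> h2pair B l \<in> \<int>)"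
proof
  assume v: "v \<in> TSB \<omega> B"
  obtain a l b where vv: "v = (a, l, b)" by (cases v) auto
  have MZ: "a \<in> \<int>" "l \<in> H2Z" "b \<in> \<int>" using v vv unfolding TSB_def MZ_def by auto
  have orth: "\<And>w. w \<in> NSt \<omega> B \<Longrightarrow> mpair (a, l, b) w = 0" using v vv unfolding TSB_def by auto
  have z: "(0, (\<lambda>_. 0), 1) \<in> NSt \<omega> B"
    unfolding NSt_iff MZ_def H2Z_def H2_def cplx_def by (simp add: h2pair_zero_left)
  have a0: "a = 0" using orth[OF z] by (simp add: mpair_def h2pair_zero_right)
  have lTS: "l \<in> TS \<omega>"
    unfolding TS_def
  proof (intro CollectI conjI ballI MZ(2))
    fix n assume n: "n \<in> NS \<omega>"
    then have "(0, n, 0) \<in> NSt \<omega> B"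
      unfolding NSt_iff NS_def MZ_def by (simp add: cplx_def)
    from orth[OF this] show "h2pair l n = 0" by (simp add: mpair_def)
  qed
  obtain N::int where N: "N > 0" "\<forall>i. of_int N * B i \<in> \<int>" using common_den[OF B] by blast
  have "(of_int N, (\<lambda>i. of_int N * B i), 0) \<in> NSt \<omega> B"
    unfolding NSt_iff MZ_def H2Z_def using N B
    by (auto simp: H2_def cplx_def h2pair_zero_left)
  from orth[OF this] have "h2pair l (\<lambda>i. of_int N * B i) - of_int N * b = 0"
    by (simp add: mpair_def)
  then have "of_int N * (h2pair l B - b) = 0" by (simp only: h2pair_scale_right) (simp add: algebra_simps)
  then have "b = h2pair B l" using N by (simp add: h2pair_sym)
  then show "\<exists>l. v = (0, l, h2pair B l) \<and> l \<in> TS \<omega> \<and> h2pair B l \<in> \<int>"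
    using vv a0 lTS MZ by auto
next
  assume "\<exists>l. v = (0, l, h2pair B l) \<and> l \<in> TS \<omega> \<and> h2pair B l \<in> \<int>"
  then obtain l where v: "v = (0, l, h2pair B l)" and l: "l \<in> TS \<omega>" "h2pair B l \<in> \<int>" by blast
  have "v \<in> MZ" using v l unfolding MZ_def TS_def by auto
  moreover have "\<forall>w \<in> NSt \<omega> B. mpair v w = 0"
  proof
    fix w assume w: "w \<in> NSt \<omega> B"
    obtain a' l' b' where ww: "w = (a', l', b')" by (cases w) auto
    have h: "h2pair (cplx (\<lambda>i. l' i - a' * B i)) \<omega> = 0" and l'Z: "l' \<in> H2Z"
      using w ww NSt_iff[of a' l' b' \<omega> B] unfolding MZ_def by auto
    have "(\<lambda>i. l' i - a' * B i) \<in> H2" using l'Z B unfolding H2Z_def H2_def by auto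
    from orth_rat[OF this h l(1)] have "h2pair l l' - a' * h2pair l B = 0"
      by (simp add: h2pair_diff_left h2pair_sym[of l])
    then show "mpair v w = 0" unfolding v ww mpair_def by (simp add: h2pair_sym)
  qed
  ultimately show "v \<in> TSB \<omega> B" unfolding TSB_def by auto
qed

lemma int_div_Ints: "d > 0 \<Longrightarrow> (of_int k / of_nat d :: rat) \<in> \<int> \<longleftrightarrow> int d dvd k"
proof
  assume d: "d > 0" and "(of_int k / of_nat d :: rat) \<in> \<int>"
  then obtain q where q: "(of_int k / of_nat d :: rat) = of_int q" by (auto elim: Ints_cases)
  then have "(of_int k :: rat) = of_int (int d * q)" using d by (simp add: field_simps)
  then have "k = int d * q" by (simp only: of_int_eq_iff)
  then show "int d dvd k" by simp
next
  assume d: "d > 0" and "int d dvd k"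
  then obtain q where "k = int d * q" by auto
  then have "(of_int k / of_nat d :: rat) = of_int q" using d by simp
  then show "(of_int k / of_nat d :: rat) \<in> \<int>" by simp
qed

theorem lemma2p2:
  fixes \<omega> :: "nat \<Rightarrow> complex" and B :: "nat \<Rightarrow> rat" and d :: nat
    and y :: "rat mukai"
  assumes S: "projective_K3_period \<omega>"
    and B: "B \<in> H2"
    and d: "d = br_order \<omega> B"
  shows "(0, (\<lambda>_. 0), - 1 / of_nat d) \<in> mdual (NSt \<omega> B)
    \<and> (y \<in> mdual (TSB \<omega> B) \<and> madd (0, (\<lambda>_. 0), - 1 / of_nat d) y \<in> MZ \<longrightarrow>
        bij_betw (\<lambda>t. eB B (0, t, 0)) (TS \<omega>) (gen_by (TSB \<omega> B) y)
      \<and> (\<forall>t \<in> TS \<omega>. \<forall>t' \<in> TS \<omega>. mpair (eB B (0, t, 0)) (eB B (0, t', 0)) = h2pair t t')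
      \<and> (\<forall>t \<in> TS \<omega>. mcplx (eB B (0, t, 0)) = eB (cplx B) (0, cplx t, 0))
      \<and> (\<forall>k::int. msc (of_int k) y \<in> TSB \<omega> B \<longleftrightarrow> int d dvd k)
      \<and> (\<forall>t \<in> TS \<omega>. \<forall>s \<in> TSB \<omega> B. \<forall>k::int.
           eB B (0, t, 0) = madd s (msc (of_int k) y) \<longrightarrow>
           h2pair B t - of_int k / of_nat d \<in> \<int>))"
proof -
  have dp: "d > 0" and dI: "\<forall>t \<in> TS \<omega>. of_nat d * h2pair B t \<in> \<int>"
    using br_props[OF B] unfolding d by auto
  have part1: "(0, (\<lambda>_. 0), - 1 / of_nat d) \<in> mdual (NSt \<omega> B)"
    unfolding mdual_def
  proof (intro CollectI conjI ballI)
    have z: "(0, (\<lambda>_. 0), 1) \<in> NSt \<omega> B"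
      unfolding NSt_iff MZ_def H2Z_def H2_def cplx_def by (simp add: h2pair_zero_left)
    show "(0, (\<lambda>_. 0), - 1 / of_nat d) \<in> qspan (NSt \<omega> B)"
      unfolding qspan_def
      by (rule CollectI, rule exI[of _ "{(0, (\<lambda>_. 0), 1)}"], rule exI[of _ "\<lambda>_. - 1 / of_nat d"])
        (use z in auto)
  next
    fix v assume v: "v \<in> NSt \<omega> B"
    obtain a l b where vv: "v = (a, l, b)" by (cases v) auto
    have h: "h2pair (cplx (\<lambda>i. l i - a * B i)) \<omega> = 0" and lZ: "l \<in> H2Z" and aZ: "a \<in> \<int>"
      using v vv NSt_iff[of a l b \<omega> B] unfolding MZ_def by auto
    obtain a0 where a0: "a = of_int a0" using aZ by (auto elim: Ints_cases)
    have r: "(\<lambda>i. l i - a * B i) \<in> H2" using lZ B unfolding H2Z_def H2_def by auto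
    have "\<forall>t \<in> TS \<omega>. of_int a0 * h2pair B t \<in> \<int>"
    proof
      fix t assume t: "t \<in> TS \<omega>"
      from orth_rat[OF r h t] have "h2pair t l - a * h2pair t B = 0"
        by (simp add: h2pair_diff_left h2pair_sym[of t])
      then have "of_int a0 * h2pair B t = h2pair t l" using a0 by (simp add: h2pair_sym)
      moreover have "h2pair t l \<in> \<int>" using t lZ H2Z_int unfolding TS_def by auto
      ultimately show "of_int a0 * h2pair B t \<in> \<int>" by simp
    qed
    from br_dvd[OF B this] have "int d dvd a0" unfolding d .
    then have "(of_int a0 / of_nat d :: rat) \<in> \<int>" using int_div_Ints[OF dp] by blast
    then show "mpair (0, (\<lambda>_. 0), - 1 / of_nat d) v \<in> \<int>"
      unfolding vv mpair_def using a0 by (simp add: h2pair_zero_left)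
  qed
  show ?thesis
  proof (rule conjI[OF part1], rule impI)
    assume yy: "y \<in> mdual (TSB \<omega> B) \<and> madd (0, (\<lambda>_. 0), - 1 / of_nat d) y \<in> MZ"
    then obtain F c where F: "finite F" "F \<subseteq> TSB \<omega> B" and
      yF: "y = (\<Sum>v\<in>F. c v * fst v, (\<lambda>i. \<Sum>v\<in>F. c v * fst (snd v) i), \<Sum>v\<in>F. c v * snd (snd v))"
      unfolding mdual_def qspan_def by blast
    define m where "m = (\<lambda>i. \<Sum>v\<in>F. c v * fst (snd v) i)"
    have Fv: "\<And>v. v \<in> F \<Longrightarrow> fst v = 0 \<and> snd (snd v) = h2pair B (fst (snd v)) \<and> fst (snd v) \<in> TS \<omega>"
      using F(2) TSB_iff[OF B] by fastforce
    have y1: "(\<Sum>v\<in>F. c v * fst v) = 0" using Fv by simp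
    have "(\<Sum>v\<in>F. c v * snd (snd v)) = (\<Sum>v\<in>F. h2pair B (\<lambda>i. c v * fst (snd v) i))"
      using Fv by (intro sum.cong refl) (simp add: h2pair_scale_right)
    also have "\<dots> = h2pair B m" unfolding m_def by (simp add: h2pair_sum_right)
    finally have y3: "(\<Sum>v\<in>F. c v * snd (snd v)) = h2pair B m" .
    have yv: "y = (0, m, h2pair B m)" using yF y1 y3 unfolding m_def by simp
    have mZ: "m \<in> H2Z" and hm: "- 1 / of_nat d + h2pair B m \<in> \<int>"
      using yy unfolding yv madd_def MZ_def by auto
    have "\<forall>n \<in> NS \<omega>. h2pair m n = 0"
    proof
      fix n assume n: "n \<in> NS \<omega>"
      have "h2pair m n = (\<Sum>v\<in>F. h2pair (\<lambda>i. c v * fst (snd v) i) n)"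
        unfolding m_def by (simp add: h2pair_sum_left)
      also have "\<dots> = 0" using Fv n unfolding TS_def
        by (intro sum.neutral ballI) (simp add: h2pair_scale_left)
      finally show "h2pair m n = 0" .
    qed
    then have mTS: "m \<in> TS \<omega>" using mZ unfolding TS_def by auto
    have hm': "h2pair B m - 1 / of_nat d \<in> \<int>" using hm by simp
    have e0: "\<And>t. eB B (0, t, 0) = (0, t, h2pair B t)" by (rule eB_0)
    have comb: "\<And>l k. madd (0, l, h2pair B l) (msc (of_int k) y)
        = (0, (\<lambda>i. l i + of_int k * m i), h2pair B (\<lambda>i. l i + of_int k * m i))"
      unfolding yv madd_def msc_def by (simp add: h2pair_addscale_right)
    have bij: "bij_betw (\<lambda>t. eB B (0, t, 0)) (TS \<omega>) (gen_by (TSB \<omega> B) y)"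
      unfolding bij_betw_def
    proof
      show "inj_on (\<lambda>t. eB B (0, t, 0)) (TS \<omega>)" unfolding e0 by (rule inj_onI) simp
      show "(\<lambda>t. eB B (0, t, 0)) ` TS \<omega> = gen_by (TSB \<omega> B) y"
      proof
        show "(\<lambda>t. eB B (0, t, 0)) ` TS \<omega> \<subseteq> gen_by (TSB \<omega> B) y"
        proof
          fix x assume "x \<in> (\<lambda>t. eB B (0, t, 0)) ` TS \<omega>"
          then obtain t where t: "t \<in> TS \<omega>" and x: "x = (0, t, h2pair B t)" using e0 by auto
          obtain j where j: "of_nat d * h2pair B t = of_int j" using dI t by (auto elim: Ints_cases)
          define l where "l = (\<lambda>i. t i + of_int (- j) * m i)"
          have lTS: "l \<in> TS \<omega>" unfolding l_def using t mTS by (rule TS_addscale)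
          have "h2pair B l = h2pair B t - of_int j * h2pair B m"
            unfolding l_def h2pair_addscale_right by simp
          also have "\<dots> = - of_int j * (h2pair B m - 1 / of_nat d)"
            using j dp by (simp add: field_simps)
          also have "\<dots> \<in> \<int>" using hm' by (intro Ints_mult) auto
          finally have hl: "h2pair B l \<in> \<int>" .
          have s: "(0, l, h2pair B l) \<in> TSB \<omega> B" using TSB_iff[OF B] lTS hl by blast
          have "(\<lambda>i. l i + of_int j * m i) = t" unfolding l_def by auto
          then have "x = madd (0, l, h2pair B l) (msc (of_int j) y)" unfolding comb x by simp
          then show "x \<in> gen_by (TSB \<omega> B) y" unfolding gen_by_def using s by blast
        qed
      next
        show "gen_by (TSB \<omega> B) y \<subseteq> (\<lambda>t. eB B (0, t, 0)) ` TS \<omega>"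
        proof
          fix x assume "x \<in> gen_by (TSB \<omega> B) y"
          then obtain s k where s: "s \<in> TSB \<omega> B" and x: "x = madd s (msc (of_int k) y)"
            unfolding gen_by_def by blast
          obtain l where l: "s = (0, l, h2pair B l)" "l \<in> TS \<omega>" using s TSB_iff[OF B] by blast
          have "x = eB B (0, (\<lambda>i. l i + of_int k * m i), 0)" unfolding x l comb e0 ..
          moreover have "(\<lambda>i. l i + of_int k * m i) \<in> TS \<omega>" using l(2) mTS by (rule TS_addscale)
          ultimately show "x \<in> (\<lambda>t. eB B (0, t, 0)) ` TS \<omega>" by blast
        qed
      qed
    qed
    have isom: "\<forall>t \<in> TS \<omega>. \<forall>t' \<in> TS \<omega>. mpair (eB B (0, t, 0)) (eB B (0, t', 0)) = h2pair t t'"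
      unfolding e0 mpair_def by simp
    have hodge: "\<forall>t \<in> TS \<omega>. mcplx (eB B (0, t, 0)) = eB (cplx B) (0, cplx t, 0)"
      unfolding e0 mcplx_def eB_def by (simp add: h2pair_cplx)
    have ord: "\<forall>k::int. msc (of_int k) y \<in> TSB \<omega> B \<longleftrightarrow> int d dvd k"
    proof
      fix k :: int
      have km: "(\<lambda>i. of_int k * m i) \<in> TS \<omega>" using mTS by (rule TS_scale)
      have "msc (of_int k) y = (0, (\<lambda>i. of_int k * m i), h2pair B (\<lambda>i. of_int k * m i))"
        unfolding yv msc_def by (simp add: h2pair_scale_right)
      then have "msc (of_int k) y \<in> TSB \<omega> B \<longleftrightarrow> of_int k * h2pair B m \<in> \<int>"
        using TSB_iff[OF B] km by (auto simp: h2pair_scale_right)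
      also have "\<dots> \<longleftrightarrow> (of_int k / of_nat d :: rat) \<in> \<int>"
      proof -
        have kI: "of_int k * (h2pair B m - 1 / of_nat d) \<in> \<int>" using hm' by (intro Ints_mult) auto
        have eq: "of_int k * h2pair B m = of_int k * (h2pair B m - 1 / of_nat d) + of_int k / of_nat d"
          by (simp add: field_simps)
        show ?thesis
        proof
          assume "of_int k * h2pair B m \<in> \<int>"
          then have "of_int k * h2pair B m - of_int k * (h2pair B m - 1 / of_nat d) \<in> \<int>"
            using kI by (rule Ints_diff)
          then show "(of_int k / of_nat d :: rat) \<in> \<int>" using eq by simp
        next
          assume "(of_int k / of_nat d :: rat) \<in> \<int>"
          then show "of_int k * h2pair B m \<in> \<int>" using kI eq by (metis Ints_add)
        qed
      qed
      also have "\<dots> \<longleftrightarrow> int d dvd k" by (rule int_div_Ints[OF dp])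
      finally show "msc (of_int k) y \<in> TSB \<omega> B \<longleftrightarrow> int d dvd k" .
    qed
    have last: "\<forall>t \<in> TS \<omega>. \<forall>s \<in> TSB \<omega> B. \<forall>k::int.
           eB B (0, t, 0) = madd s (msc (of_int k) y) \<longrightarrow>
           h2pair B t - of_int k / of_nat d \<in> \<int>"
    proof (intro ballI allI impI)
      fix t s k assume t: "t \<in> TS \<omega>" and s: "s \<in> TSB \<omega> B"
        and eq: "eB B (0, t, 0) = madd s (msc (of_int k) y)"
      obtain l where l: "s = (0, l, h2pair B l)" "h2pair B l \<in> \<int>" using s TSB_iff[OF B] by blast
      have "h2pair B t = h2pair B l + of_int k * h2pair B m"
        using eq unfolding e0 l yv madd_def msc_def by (simp add: h2pair_addscale_right)
      then have "h2pair B t - of_int k / of_nat d = h2pair B l + of_int k * (h2pair B m - 1 / of_nat d)"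
        by (simp add: field_simps)
      also have "\<dots> \<in> \<int>" using l(2) hm' by (intro Ints_add Ints_mult) auto
      finally show "h2pair B t - of_int k / of_nat d \<in> \<int>" .
    qed
    show "bij_betw (\<lambda>t. eB B (0, t, 0)) (TS \<omega>) (gen_by (TSB \<omega> B) y)
      \<and> (\<forall>t \<in> TS \<omega>. \<forall>t' \<in> TS \<omega>. mpair (eB B (0, t, 0)) (eB B (0, t', 0)) = h2pair t t')
      \<and> (\<forall>t \<in> TS \<omega>. mcplx (eB B (0, t, 0)) = eB (cplx B) (0, cplx t, 0))
      \<and> (\<forall>k::int. msc (of_int k) y \<in> TSB \<omega> B \<longleftrightarrow> int d dvd k)
      \<and> (\<forall>t \<in> TS \<omega>. \<forall>s \<in> TSB \<omega> B. \<forall>k::int.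
           eB B (0, t, 0) = madd s (msc (of_int k) y) \<longrightarrow>
           h2pair B t - of_int k / of_nat d \<in> \<int>)"
      using bij isom hodge ord last by blast
  qed
qed

end
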